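(* Let $S$ be a finite non-empty set and $\Sigma\subseteq\mathbb{R}_+\times S$ locally finite, and let $(X_n,\eta_n)$ be a time-homogeneous irreducible Markov chain on $\Sigma$ such that every line $\Lambda_k=\{x:(x,k)\in\Sigma\}$ is unbounded. Suppose that for some $p>2$ there is $C_p<\infty$ with $\mathbb{E}_{x,i}[|X_{n+1}-X_n|^p]\le C_p$ for all $(x,i)\in\Sigma$. Suppose $q_{ij}(x)\to q_{ij}$ as $x\to\infty$ with $(q_{ij})$ an irreducible stochastic matrix, and suppose there exist $c_i\in\mathbb{R}$, $s_i^2\ge0$ (at least one $s_i^2\ne0$) with $\mu_i(x)=c_i/x+o(x^{-1})$ and $\sigma_i^2(x)=s_i^2+o(1)$ as $x\to\infty$. Let $b_i\in\mathbb{R}$, $i\in S$, be arbitrary and let $f_\nu$ be as defined in the context. Then for any $\nu\in(2-p,p]$, as $x\to\infty$, \[\mathbb{E}_{x,i}[f_\nu(X_{n+1},\eta_{n+1})-f_\nu(X_n,\eta_n)]=\frac\nu2x^{\nu-2}\Big(2c_i+(\nu-1)s_i^2+\sum_{j\in S}(b_j-b_i)q_{ij}+o(1)\Big).\]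
   Context: Locally finite means $\Sigma\cap([0,r]\times S)$ is finite for every $r\ge0$. $\mathbb{E}_{x,i}[\cdot]=\mathbb{E}[\cdot\mid X_n=x,\eta_n=i]$; $q_{ij}(x)=\Pr[\eta_{n+1}=j\mid X_n=x,\eta_n=i]$; $\mu_i(x)=\mathbb{E}_{x,i}[X_{n+1}-X_n]$; $\sigma_i^2(x)=\mathbb{E}_{x,i}[(X_{n+1}-X_n)^2]$. Given $\nu\in\mathbb{R}$ and $(b_i)_{i\in S}$, $x_0:=1+\sqrt{|\nu|\max_i|b_i|}$ and $f_\nu(x,i)=x^\nu+\frac\nu2b_ix^{\nu-2}$ for $x\ge x_0$, $f_\nu(x,i)=x_0^\nu+\frac\nu2b_ix_0^{\nu-2}$ for $x<x_0$. *)

theory Defs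
  imports "HOL-Probability.Probability"
begin

definition x0_const :: "'i set \<Rightarrow> ('i \<Rightarrow> real) \<Rightarrow> real \<Rightarrow> real" where
  "x0_const S b \<nu> = 1 + sqrt (\<bar>\<nu>\<bar> * Max ((\<lambda>i. \<bar>b i\<bar>) ` S))"

definition f_nu :: "'i set \<Rightarrow> ('i \<Rightarrow> real) \<Rightarrow> real \<Rightarrow> real \<times> 'i \<Rightarrow> real" where
  "f_nu S b \<nu> z = (let x = fst z; i = snd z; x0 = x0_const S b \<nu> in
     if x \<ge> x0 then x powr \<nu> + \<nu> / 2 * b i * x powr (\<nu> - 2)
     else x0 powr \<nu> + \<nu> / 2 * b i * x0 powr (\<nu> - 2))"

definition step_rel :: "(real \<times> 'i) set \<Rightarrow> (real \<times> 'i \<Rightarrow> (real \<times> 'i) pmf) \<Rightarrow> ((real \<times> 'i) \<times> (real \<times> 'i)) set" where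
  "step_rel \<Sigma> P = {(z, w). z \<in> \<Sigma> \<and> w \<in> set_pmf (P z)}"

definition line :: "(real \<times> 'i) set \<Rightarrow> 'i \<Rightarrow> real set" where
  "line \<Sigma> k = {x. (x, k) \<in> \<Sigma>}"

definition along_line :: "(real \<times> 'i) set \<Rightarrow> 'i \<Rightarrow> real filter" where
  "along_line \<Sigma> k = inf at_top (principal (line \<Sigma> k))"

end

theory Submission
  imports Defs
begin



lemma powr_shift_bound:
  fixes e t :: real assumes "\<bar>t\<bar> \<le> 1/2"
  shows "(1+t) powr e \<le> 2 powr \<bar>e\<bar>"
proof (cases "e \<ge> 0")
  case True
  have "(1+t) powr e \<le> 2 powr e" using assms True by (intro powr_mono2) auto
  then show ?thesis using True by simp
next
  case False
  have "(1+t) powr e = inverse ((1+t) powr (-e))" using assms by (simp add: powr_minus)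
  also have "(1+t) powr (-e) \<ge> (1/2) powr (-e)" using assms False by (intro powr_mono2) auto
  hence "inverse ((1+t) powr (-e)) \<le> inverse ((1/2) powr (-e))"
    using False by (intro le_imp_inverse_le) auto
  also have "inverse ((1/2::real) powr (-e)) = 2 powr (-e)"
    by (simp add: powr_divide powr_minus)
  finally show ?thesis using False by simp
qed

lemma taylor_powr:
  fixes a :: real and n :: nat
  shows "\<exists>C\<ge>0. \<forall>t::real. \<bar>t\<bar> \<le> 1/2 \<longrightarrow>
     \<bar>(1+t) powr a - (\<Sum>m<n. (\<Prod>k<m. (a - real k)) / fact m * t ^ m)\<bar> \<le> C * \<bar>t\<bar> ^ n"
proof -
  define diff where "diff m t = (\<Prod>k<m. (a - real k)) * (1+t) powr (a - real m)" for m t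
  define C where "C = \<bar>\<Prod>k<n. (a - real k)\<bar> / fact n * 2 powr \<bar>a - real n\<bar>"
  show ?thesis
  proof (intro exI conjI allI impI)
    show "C \<ge> 0" unfolding C_def by simp
  next
    fix x :: real assume x: "\<bar>x\<bar> \<le> 1/2"
    have d0: "diff 0 = (\<lambda>t. (1+t) powr a)" unfolding diff_def by (rule ext) simp
    have D: "\<forall>m t. m < n \<and> \<bar>t\<bar> \<le> \<bar>x\<bar> \<longrightarrow> DERIV (diff m) t :> diff (Suc m) t"
    proof (intro allI impI)
      fix m t assume mt: "m < n \<and> \<bar>t\<bar> \<le> \<bar>x\<bar>"
      hence pos: "1 + t > 0" using x by auto
      have "DERIV (\<lambda>t. (1+t) powr (a - real m)) t :> (a - real m) * (1+t) powr (a - real m - 1) * 1"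
        by (rule DERIV_fun_powr[where g="\<lambda>t. 1+t", simplified]) (use pos in \<open>auto intro!: derivative_eq_intros\<close>)
      hence h: "DERIV (\<lambda>t. (\<Prod>k<m. (a - real k)) * (1+t) powr (a - real m)) t :>
               (\<Prod>k<m. (a - real k)) * ((a - real m) * (1+t) powr (a - real m - 1) * 1)"
        by (rule DERIV_cmult)
      have eqn: "(\<Prod>k<m. (a - real k)) * ((a - real m) * (1+t) powr (a - real m - 1) * 1) = diff (Suc m) t"
      proof -
        have e: "a - real (Suc m) = a - real m - 1" by simp
        show ?thesis unfolding diff_def e by (simp add: prod.lessThan_Suc)
      qed
      have df: "diff m = (\<lambda>t. (\<Prod>k<m. (a - real k)) * (1+t) powr (a - real m))"
        by (rule ext) (simp add: diff_def)
      show "DERIV (diff m) t :> diff (Suc m) t" unfolding df eqn[symmetric] by (rule h)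
    qed
    obtain t where t: "\<bar>t\<bar> \<le> \<bar>x\<bar>"
      and eq: "(1+x) powr a = (\<Sum>m<n. diff m 0 / fact m * x ^ m) + diff n t / fact n * x ^ n"
      using Maclaurin_bi_le[OF d0 D] by blast
    have s: "(\<Sum>m<n. diff m 0 / fact m * x ^ m) = (\<Sum>m<n. (\<Prod>k<m. (a - real k)) / fact m * x ^ m)"
      by (simp add: diff_def)
    have "\<bar>diff n t / fact n * x ^ n\<bar> = \<bar>\<Prod>k<n. (a - real k)\<bar> / fact n * (1+t) powr (a - real n) * \<bar>x\<bar> ^ n"
      by (simp add: diff_def abs_mult power_abs)
    also have "\<dots> \<le> \<bar>\<Prod>k<n. (a - real k)\<bar> / fact n * 2 powr \<bar>a - real n\<bar> * \<bar>x\<bar> ^ n"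
      using powr_shift_bound[of t "a - real n"] t x
      by (intro mult_right_mono mult_left_mono) auto
    finally show "\<bar>(1+x) powr a - (\<Sum>m<n. (\<Prod>k<m. (a - real k)) / fact m * x ^ m)\<bar> \<le> C * \<bar>x\<bar> ^ n"
      using eq s by (simp add: C_def)
  qed
qed

lemma taylor3:
  fixes a :: real
  shows "\<exists>C\<ge>0. \<forall>t::real. \<bar>t\<bar> \<le> 1/2 \<longrightarrow> \<bar>(1+t) powr a - 1 - a*t - a*(a-1)/2*t^2\<bar> \<le> C * \<bar>t\<bar>^3"
proof -
  obtain C where C0: "C \<ge> 0" and C: "\<forall>t::real. \<bar>t\<bar> \<le> 1/2 \<longrightarrow>
     \<bar>(1+t) powr a - (\<Sum>m<3. (\<Prod>k<m. (a - real k)) / fact m * t ^ m)\<bar> \<le> C * \<bar>t\<bar> ^ 3"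
    using taylor_powr by blast
  have eq: "(1+t) powr a - 1 - a*t - a*(a-1)/2*t^2 = (1+t) powr a - (\<Sum>m<3. (\<Prod>k<m. (a - real k)) / fact m * t ^ m)" for t :: real
    by (simp add: eval_nat_numeral algebra_simps)
  show ?thesis
  proof (intro exI[of _ C] conjI allI impI)
    show "C \<ge> 0" by fact
    fix t :: real assume "\<bar>t\<bar> \<le> 1/2"
    thus "\<bar>(1+t) powr a - 1 - a*t - a*(a-1)/2*t^2\<bar> \<le> C * \<bar>t\<bar>^3" using C by (simp only: eq)
  qed
qed

lemma taylor1:
  fixes a :: real
  shows "\<exists>C\<ge>0. \<forall>t::real. \<bar>t\<bar> \<le> 1/2 \<longrightarrow> \<bar>(1+t) powr a - 1\<bar> \<le> C * \<bar>t\<bar>"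
proof -
  obtain C where C0: "C \<ge> 0" and C: "\<forall>t::real. \<bar>t\<bar> \<le> 1/2 \<longrightarrow>
     \<bar>(1+t) powr a - (\<Sum>m<1. (\<Prod>k<m. (a - real k)) / fact m * t ^ m)\<bar> \<le> C * \<bar>t\<bar> ^ 1"
    using taylor_powr by blast
  thus ?thesis by auto
qed




lemma tail_pow:
  fixes x q k p :: real
  assumes "0 \<le> k" "k \<le> p" "x > 0" "q > x/2"
  shows "q powr k \<le> 2 powr p * q powr p * x powr (k - p)"
proof -
  have q: "q > 0" using assms by auto
  have "q powr k = q powr p * q powr (k - p)" by (simp add: powr_add[symmetric])
  also have "q powr (k-p) \<le> (x/2) powr (k-p)" using assms by (intro powr_mono2') auto
  hence "q powr p * q powr (k - p) \<le> q powr p * (x/2) powr (k-p)"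
    by (intro mult_left_mono) auto
  also have "(x/2) powr (k-p) = x powr (k-p) * 2 powr (p-k)"
  proof -
    have a: "2 powr (k-p) * (x/2) powr (k-p) = x powr (k-p)" by (simp add: powr_mult[symmetric])
    have b: "2 powr (k-p) * 2 powr (p-k) = (1::real)" by (simp add: powr_add[symmetric])
    have "(x/2) powr (k-p) = (x/2) powr (k-p) * (2 powr (k-p) * 2 powr (p-k))" by (simp only: b)
    also have "\<dots> = (2 powr (k-p) * (x/2) powr (k-p)) * 2 powr (p-k)" by (simp only: ac_simps)
    also have "\<dots> = x powr (k-p) * 2 powr (p-k)" by (simp only: a)
    finally show ?thesis .
  qed
  also have "2 powr (p-k) \<le> 2 powr p" using assms by (intro powr_mono) auto
  hence "q powr p * (x powr (k-p) * 2 powr (p-k)) \<le> q powr p * (x powr (k-p) * 2 powr p)"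
    by (intro mult_left_mono) auto
  finally show ?thesis by (simp add: algebra_simps)
qed

lemma tail_H:
  fixes X0 x y e p :: real
  assumes X0: "X0 \<ge> 1" and x: "x \<ge> 2*X0" and q: "\<bar>y-x\<bar> > x/2" and e: "e \<le> p" and p: "p > 0"
  shows "(max y X0) powr e \<le> 8 powr p * \<bar>y-x\<bar> powr p * x powr (max e 0 - p)"
proof (cases "e \<ge> 0")
  case True
  have xp: "x > 0" using X0 x by auto
  have "max y X0 \<le> 4 * \<bar>y-x\<bar>" using X0 x q by (simp add: max_def abs_real_def split: if_splits)
  hence "(max y X0) powr e \<le> (4 * \<bar>y-x\<bar>) powr e" using True X0 by (intro powr_mono2) auto
  also have "\<dots> = 4 powr e * \<bar>y-x\<bar> powr e" by (simp add: powr_mult)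
  also have "\<bar>y-x\<bar> powr e \<le> 2 powr p * \<bar>y-x\<bar> powr p * x powr (e - p)"
    using tail_pow[of e p x "\<bar>y-x\<bar>"] True e xp q by auto
  hence "4 powr e * \<bar>y-x\<bar> powr e \<le> 4 powr e * (2 powr p * \<bar>y-x\<bar> powr p * x powr (e - p))"
    by (intro mult_left_mono) auto
  also have "4 powr e * (2 powr p * \<bar>y-x\<bar> powr p * x powr (e - p))
      \<le> 4 powr p * (2 powr p * \<bar>y-x\<bar> powr p * x powr (e - p))"
    using e by (intro mult_right_mono powr_mono) auto
  also have "4 powr p * (2 powr p * \<bar>y-x\<bar> powr p * x powr (e - p)) = 8 powr p * \<bar>y-x\<bar> powr p * x powr (max e 0 - p)"
    using True by (simp add: powr_mult[symmetric])
  finally show ?thesis .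
next
  case False
  have xp: "x > 0" using X0 x by auto
  have "(max y X0) powr e \<le> 1 powr e" using False X0 by (intro powr_mono2') auto
  also have "\<dots> = \<bar>y-x\<bar> powr 0" using q xp by auto
  also have "\<dots> \<le> 2 powr p * \<bar>y-x\<bar> powr p * x powr (0 - p)"
    using tail_pow[of 0 p x "\<bar>y-x\<bar>"] xp q p by auto
  also have "\<dots> \<le> 8 powr p * \<bar>y-x\<bar> powr p * x powr (0 - p)"
    using p by (intro mult_right_mono powr_mono2) auto
  also have "\<dots> = 8 powr p * \<bar>y-x\<bar> powr p * x powr (max e 0 - p)"
    using False by simp
  finally show ?thesis .
qed

lemma near_H:
  fixes x y \<nu> C1 :: real
  assumes C1: "\<forall>t. \<bar>t\<bar> \<le> 1/2 \<longrightarrow> \<bar>(1+t) powr \<nu> - 1 - \<nu>*t - \<nu>*(\<nu>-1)/2*t^2\<bar> \<le> C1*\<bar>t\<bar>^3"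
    and x: "x > 0" and q: "\<bar>y-x\<bar> \<le> x/2"
  shows "\<bar>y powr \<nu> - x powr \<nu> - \<nu> * x powr (\<nu>-1) * (y-x) - \<nu>*(\<nu>-1)/2 * x powr (\<nu>-2) * (y-x)^2\<bar>
          \<le> C1 * x powr (\<nu>-3) * \<bar>y-x\<bar>^3"
proof -
  define t where "t = (y-x)/x"
  have ty: "y = x*(1+t)" using x by (simp add: t_def field_simps)
  have t: "\<bar>t\<bar> \<le> 1/2" using x q by (simp add: t_def abs_divide field_simps)
  have yp: "y powr \<nu> = x powr \<nu> * (1+t) powr \<nu>" by (simp add: ty powr_mult)
  have p1: "x powr (\<nu>-1) = x powr \<nu> / x" using x by (simp add: powr_diff)
  have p2: "x powr (\<nu>-2) = x powr \<nu> / x^2" using x by (simp add: powr_diff)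
  have p3: "x powr (\<nu>-3) = x powr \<nu> / x^3" using x by (simp add: powr_diff)
  have "y powr \<nu> - x powr \<nu> - \<nu> * x powr (\<nu>-1) * (y-x) - \<nu>*(\<nu>-1)/2 * x powr (\<nu>-2) * (y-x)^2
      = x powr \<nu> * ((1+t) powr \<nu> - 1 - \<nu>*t - \<nu>*(\<nu>-1)/2*t^2)"
    using x by (simp add: yp p1 p2 t_def field_simps power2_eq_square)
  hence "\<bar>y powr \<nu> - x powr \<nu> - \<nu> * x powr (\<nu>-1) * (y-x) - \<nu>*(\<nu>-1)/2 * x powr (\<nu>-2) * (y-x)^2\<bar>
      = x powr \<nu> * \<bar>(1+t) powr \<nu> - 1 - \<nu>*t - \<nu>*(\<nu>-1)/2*t^2\<bar>" by (simp add: abs_mult)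
  also have "\<dots> \<le> x powr \<nu> * (C1*\<bar>t\<bar>^3)" using C1 t by (intro mult_left_mono) auto
  also have "\<dots> = C1 * x powr (\<nu>-3) * \<bar>y-x\<bar>^3"
    using x by (simp add: p3 t_def abs_divide power_divide)
  finally show ?thesis .
qed

lemma near_K:
  fixes x y e C2 :: real
  assumes C2: "\<forall>t. \<bar>t\<bar> \<le> 1/2 \<longrightarrow> \<bar>(1+t) powr e - 1\<bar> \<le> C2*\<bar>t\<bar>"
    and x: "x > 0" and q: "\<bar>y-x\<bar> \<le> x/2"
  shows "\<bar>y powr e - x powr e\<bar> \<le> C2 * x powr (e-1) * \<bar>y-x\<bar>"
proof -
  define t where "t = (y-x)/x"
  have ty: "y = x*(1+t)" using x by (simp add: t_def field_simps)
  have t: "\<bar>t\<bar> \<le> 1/2" using x q by (simp add: t_def abs_divide field_simps)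
  have yp: "y powr e = x powr e * (1+t) powr e" by (simp add: ty powr_mult)
  have p1: "x powr (e-1) = x powr e / x" using x by (simp add: powr_diff)
  have "y powr e - x powr e = x powr e * ((1+t) powr e - 1)"
    by (simp add: yp algebra_simps)
  hence "\<bar>y powr e - x powr e\<bar> = x powr e * \<bar>(1+t) powr e - 1\<bar>"
    by (simp add: abs_mult)
  also have "\<dots> \<le> x powr e * (C2*\<bar>t\<bar>)" using C2 t by (intro mult_left_mono) auto
  also have "\<dots> = C2 * x powr (e-1) * \<bar>y-x\<bar>"
    using x by (simp add: p1 t_def abs_divide)
  finally show ?thesis .
qed




lemma pw:
  fixes X0 p \<nu> \<epsilon> :: real
  assumes X0: "X0 \<ge> 1" and p: "p > 2" and nu: "2 - p < \<nu>" "\<nu> \<le> p"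
    and eps: "0 < \<epsilon>" "\<epsilon> \<le> 1/2" "\<epsilon> \<le> (p-2)/2" "\<epsilon> \<le> \<nu>+p-2"
  shows "\<exists>M\<ge>0. \<forall>x y. x \<ge> 2*X0 \<longrightarrow>
     \<bar>(max y X0) powr \<nu> - x powr \<nu> - \<nu> * x powr (\<nu>-1) * (y-x) - \<nu>*(\<nu>-1)/2 * x powr (\<nu>-2) * (y-x)^2\<bar>
        \<le> M * (x powr (\<nu>-2-\<epsilon>) * (1 + \<bar>y-x\<bar> powr p)) \<and>
     \<bar>(max y X0) powr (\<nu>-2) - x powr (\<nu>-2)\<bar> \<le> M * (x powr (\<nu>-2-\<epsilon>) * (1 + \<bar>y-x\<bar> powr p))"
proof -
  obtain C1 where C10: "C1 \<ge> 0" and C1: "\<forall>t::real. \<bar>t\<bar> \<le> 1/2 \<longrightarrow> \<bar>(1+t) powr \<nu> - 1 - \<nu>*t - \<nu>*(\<nu>-1)/2*t^2\<bar> \<le> C1 * \<bar>t\<bar>^3"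
    using taylor3[of \<nu>] by blast
  obtain C2 where C20: "C2 \<ge> 0" and C2: "\<forall>t::real. \<bar>t\<bar> \<le> 1/2 \<longrightarrow> \<bar>(1+t) powr (\<nu>-2) - 1\<bar> \<le> C2 * \<bar>t\<bar>"
    using taylor1[of "\<nu>-2"] by blast
  define M where "M = C1 + C2 + 8 powr p + 2 powr p * (1 + \<bar>\<nu>\<bar> + \<bar>\<nu>*(\<nu>-1)\<bar>)"
  have M0: "M \<ge> 0" unfolding M_def using C10 C20 by simp
  have main: "\<bar>(max y X0) powr \<nu> - x powr \<nu> - \<nu> * x powr (\<nu>-1) * (y-x) - \<nu>*(\<nu>-1)/2 * x powr (\<nu>-2) * (y-x)^2\<bar>
        \<le> M * (x powr (\<nu>-2-\<epsilon>) * (1 + \<bar>y-x\<bar> powr p)) \<and>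
     \<bar>(max y X0) powr (\<nu>-2) - x powr (\<nu>-2)\<bar> \<le> M * (x powr (\<nu>-2-\<epsilon>) * (1 + \<bar>y-x\<bar> powr p))"
    if x: "x \<ge> 2*X0" for x y
  proof -
    define q where "q = \<bar>y-x\<bar>"
    define W where "W = x powr (\<nu>-2-\<epsilon>) * (1 + q powr p)"
    have xp: "x > 0" and x1: "x \<ge> 1" using x X0 by auto
    have q0: "q \<ge> 0" unfolding q_def by simp
    have qp0: "q powr p \<ge> 0" by simp
    have W0: "W \<ge> 0" unfolding W_def by simp
    have q1: "q \<le> 1 + q powr p"
    proof (cases "q \<le> 1")
      case True thus ?thesis using qp0 by linarith
    next
      case False
      hence "q powr 1 \<le> q powr p" using p by (intro powr_mono) auto
      thus ?thesis using False by simp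
    qed
    have q2: "q^2 \<le> 1 + q powr p"
    proof (cases "q \<le> 1")
      case True hence "q^2 \<le> 1" using q0 by (simp add: power_le_one)
      thus ?thesis using qp0 by linarith
    next
      case False
      hence "q powr 2 \<le> q powr p" using p by (intro powr_mono) auto
      thus ?thesis using False by simp
    qed
    show ?thesis
    proof (cases "q \<le> x/2")
      case True
      have yX: "max y X0 = y" using True x unfolding q_def by (simp add: max_def abs_real_def split: if_splits)
      have H1: "\<bar>y powr \<nu> - x powr \<nu> - \<nu> * x powr (\<nu>-1) * (y-x) - \<nu>*(\<nu>-1)/2 * x powr (\<nu>-2) * (y-x)^2\<bar>
          \<le> C1 * x powr (\<nu>-3) * q^3" using near_H[OF C1 xp] True unfolding q_def by simp
      have H2: "x powr (\<nu>-3) * q^3 \<le> W"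
      proof (cases "q \<le> x powr (1/2)")
        case True
        have "x powr (\<nu>-3) * q^3 = (x powr (\<nu>-3) * q) * q^2" by (simp add: power3_eq_cube power2_eq_square)
        also have "\<dots> \<le> (x powr (\<nu>-3) * x powr (1/2)) * q^2" using True q0 by (intro mult_right_mono mult_left_mono) auto
        also have "x powr (\<nu>-3) * x powr (1/2) = x powr (\<nu> - 5/2)"
        proof -
          have "\<nu> - 5/2 = (\<nu>-3) + 1/2" by simp
          thus ?thesis by (simp only: powr_add)
        qed
        also have "x powr (\<nu> - 5/2) * q^2 \<le> x powr (\<nu>-2-\<epsilon>) * (1 + q powr p)"
          using q2 x1 eps by (intro mult_mono powr_mono) auto
        finally show ?thesis by (simp add: W_def)
      next
        case False
        have qpos: "q > 0" using False by (smt (verit) powr_ge_zero)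
        have c1: "q^3 \<le> x * q^2"
        proof -
          have "q^3 = q * q^2" by (simp add: power3_eq_cube power2_eq_square)
          also have "\<dots> \<le> x * q^2" using \<open>q \<le> x/2\<close> q0 by (intro mult_right_mono) auto
          finally show ?thesis .
        qed
        have c2: "q^2 \<le> q powr p * x powr (1 - p/2)"
        proof -
          have "q^2 = q powr 2" using qpos by simp
          also have "\<dots> = q powr p * q powr (2-p)" by (simp add: powr_add[symmetric])
          also have "q powr (2-p) \<le> (x powr (1/2)) powr (2-p)" using False p xp by (intro powr_mono2') auto
          also have "(x powr (1/2)) powr (2-p) = x powr (1 - p/2)" by (simp add: powr_powr diff_divide_distrib)
          finally show ?thesis using qp0 by (simp add: mult_left_mono)
        qed
        have "x powr (\<nu>-3) * q^3 \<le> x powr (\<nu>-3) * (x * (q powr p * x powr (1 - p/2)))"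
          using c1 c2 xp by (intro mult_left_mono order.trans[OF c1] mult_left_mono[OF c2]) auto
        also have "\<dots> = (x powr (\<nu>-3) * x powr 1 * x powr (1 - p/2)) * q powr p" using xp by (simp add: ac_simps)
        also have "x powr (\<nu>-3) * x powr 1 * x powr (1 - p/2) = x powr (\<nu> - 1 - p/2)"
        proof -
          have "\<nu> - 1 - p/2 = (\<nu>-3) + 1 + (1 - p/2)" by simp
          thus ?thesis by (simp only: powr_add)
        qed
        also have "x powr (\<nu> - 1 - p/2) * q powr p \<le> x powr (\<nu>-2-\<epsilon>) * (1 + q powr p)"
          using x1 eps by (intro mult_mono powr_mono) auto
        finally show ?thesis by (simp add: W_def)
      qed
      have K1: "\<bar>y powr (\<nu>-2) - x powr (\<nu>-2)\<bar> \<le> C2 * x powr (\<nu>-2-1) * q"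
        using near_K[OF C2 xp] True unfolding q_def by simp
      have K2: "x powr (\<nu>-2-1) * q \<le> W"
        unfolding W_def using q1 x1 eps q0 by (intro mult_mono powr_mono) auto
      have "\<bar>(max y X0) powr \<nu> - x powr \<nu> - \<nu> * x powr (\<nu>-1) * (y-x) - \<nu>*(\<nu>-1)/2 * x powr (\<nu>-2) * (y-x)^2\<bar> \<le> C1 * W"
      proof -
        have "C1 * x powr (\<nu>-3) * q^3 \<le> C1 * W" using H2 C10 by (simp add: mult.assoc mult_left_mono)
        thus ?thesis unfolding yX using H1 by linarith
      qed
      also have "\<dots> \<le> M * W" using W0 C10 C20 by (intro mult_right_mono) (auto simp: M_def)
      finally have A: "\<bar>(max y X0) powr \<nu> - x powr \<nu> - \<nu> * x powr (\<nu>-1) * (y-x) - \<nu>*(\<nu>-1)/2 * x powr (\<nu>-2) * (y-x)^2\<bar> \<le> M * W" .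
      have "\<bar>(max y X0) powr (\<nu>-2) - x powr (\<nu>-2)\<bar> \<le> C2 * W"
      proof -
        have "C2 * x powr (\<nu>-2-1) * q \<le> C2 * W" using K2 C20 by (simp add: mult.assoc mult_left_mono)
        thus ?thesis unfolding yX using K1 by linarith
      qed
      also have "\<dots> \<le> M * W" using W0 C10 C20 by (intro mult_right_mono) (auto simp: M_def)
      finally show ?thesis using A unfolding W_def q_def by simp
    next
      case False
      hence qx: "q > x/2" by simp
      define Z where "Z = q powr p * x powr (\<nu>-2-\<epsilon>)"
      have Z0: "Z \<ge> 0" unfolding Z_def by simp
      have ZW: "Z \<le> W" unfolding Z_def W_def by (simp add: algebra_simps)
      have gen: "x powr (a - k) * q powr k \<le> 2 powr p * Z"
        if k: "0 \<le> k" "k \<le> p" and a: "a - p \<le> \<nu> - 2 - \<epsilon>" for a k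
      proof -
        have "x powr (a - k) * q powr k \<le> x powr (a - k) * (2 powr p * q powr p * x powr (k - p))"
          using tail_pow[OF k xp qx] by (intro mult_left_mono) auto
        also have "\<dots> = 2 powr p * q powr p * (x powr (a - k) * x powr (k - p))" by (simp add: ac_simps)
        also have "x powr (a - k) * x powr (k - p) = x powr (a - p)"
        proof -
          have "a - p = (a - k) + (k - p)" by simp
          thus ?thesis by (simp only: powr_add)
        qed
        also have "2 powr p * q powr p * x powr (a - p) \<le> 2 powr p * q powr p * x powr (\<nu>-2-\<epsilon>)"
          using a x1 by (intro mult_left_mono powr_mono) auto
        finally show ?thesis by (simp add: Z_def mult.assoc)
      qed
      have g0: "x powr \<nu> \<le> 2 powr p * Z" using gen[of 0 \<nu>] p eps qx xp by simp
      have g1: "x powr (\<nu>-1) * q \<le> 2 powr p * Z" using gen[of 1 \<nu>] p eps qx xp by simp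
      have g2: "x powr (\<nu>-2) * q^2 \<le> 2 powr p * Z"
      proof -
        have "q powr 2 = q^2" using qx xp by simp
        thus ?thesis using gen[of 2 \<nu>] p eps by simp
      qed
      have g3: "x powr (\<nu>-2) \<le> 2 powr p * Z" using gen[of 0 "\<nu>-2"] p eps qx xp by simp
      have t1: "(max y X0) powr \<nu> \<le> 8 powr p * Z"
      proof -
        have "(max y X0) powr \<nu> \<le> 8 powr p * q powr p * x powr (max \<nu> 0 - p)"
          using tail_H[OF X0 x _ nu(2)] qx p unfolding q_def by simp
        also have "\<dots> \<le> 8 powr p * q powr p * x powr (\<nu>-2-\<epsilon>)"
          using x1 eps p by (intro mult_left_mono powr_mono) (auto simp: max_def)
        finally show ?thesis by (simp add: Z_def mult.assoc)
      qed
      have t2: "(max y X0) powr (\<nu>-2) \<le> 8 powr p * Z"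
      proof -
        have "(max y X0) powr (\<nu>-2) \<le> 8 powr p * q powr p * x powr (max (\<nu>-2) 0 - p)"
          using tail_H[OF X0 x, of y "\<nu>-2" p] qx p nu unfolding q_def by simp
        also have "\<dots> \<le> 8 powr p * q powr p * x powr (\<nu>-2-\<epsilon>)"
          using x1 eps p by (intro mult_left_mono powr_mono) (auto simp: max_def)
        finally show ?thesis by (simp add: Z_def mult.assoc)
      qed
      have e1: "\<bar>\<nu> * x powr (\<nu>-1) * (y-x)\<bar> = \<bar>\<nu>\<bar> * (x powr (\<nu>-1) * q)"
        unfolding q_def by (simp add: abs_mult)
      have e2: "\<bar>\<nu>*(\<nu>-1)/2 * x powr (\<nu>-2) * (y-x)^2\<bar> = \<bar>\<nu>*(\<nu>-1)\<bar>/2 * (x powr (\<nu>-2) * q^2)"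
        unfolding q_def by (simp add: abs_mult)
      have e1b: "\<bar>\<nu>\<bar> * (x powr (\<nu>-1) * q) \<le> \<bar>\<nu>\<bar> * (2 powr p * Z)" using g1 by (intro mult_left_mono) auto
      have e2b: "\<bar>\<nu>*(\<nu>-1)\<bar>/2 * (x powr (\<nu>-2) * q^2) \<le> \<bar>\<nu>*(\<nu>-1)\<bar> * (2 powr p * Z)"
      proof -
        have "\<bar>\<nu>*(\<nu>-1)\<bar>/2 * (x powr (\<nu>-2) * q^2) \<le> \<bar>\<nu>*(\<nu>-1)\<bar> * (x powr (\<nu>-2) * q^2)"
          using q0 by (intro mult_right_mono) auto
        also have "\<dots> \<le> \<bar>\<nu>*(\<nu>-1)\<bar> * (2 powr p * Z)" using g2 by (intro mult_left_mono) auto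
        finally show ?thesis .
      qed
      have hp: "(max y X0) powr \<nu> \<ge> 0" "x powr \<nu> \<ge> 0" "(max y X0) powr (\<nu>-2) \<ge> 0" "x powr (\<nu>-2) \<ge> 0" by auto
      have "\<bar>(max y X0) powr \<nu> - x powr \<nu> - \<nu> * x powr (\<nu>-1) * (y-x) - \<nu>*(\<nu>-1)/2 * x powr (\<nu>-2) * (y-x)^2\<bar>
          \<le> 8 powr p * Z + 2 powr p * Z + \<bar>\<nu>\<bar> * (2 powr p * Z) + \<bar>\<nu>*(\<nu>-1)\<bar> * (2 powr p * Z)"
        using t1 g0 e1 e2 e1b e2b hp
          abs_ge_self[of "\<nu> * x powr (\<nu>-1) * (y-x)"] abs_ge_minus_self[of "\<nu> * x powr (\<nu>-1) * (y-x)"]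
          abs_ge_self[of "\<nu>*(\<nu>-1)/2 * x powr (\<nu>-2) * (y-x)^2"] abs_ge_minus_self[of "\<nu>*(\<nu>-1)/2 * x powr (\<nu>-2) * (y-x)^2"]
        by (simp only: abs_le_iff) linarith
      also have "\<dots> = (8 powr p + 2 powr p * (1 + \<bar>\<nu>\<bar> + \<bar>\<nu>*(\<nu>-1)\<bar>)) * Z" by (simp add: algebra_simps)
      also have "\<dots> \<le> M * W" unfolding M_def using Z0 ZW C10 C20
        by (intro mult_mono) auto
      finally have A: "\<bar>(max y X0) powr \<nu> - x powr \<nu> - \<nu> * x powr (\<nu>-1) * (y-x) - \<nu>*(\<nu>-1)/2 * x powr (\<nu>-2) * (y-x)^2\<bar> \<le> M * W" .
      have "\<bar>(max y X0) powr (\<nu>-2) - x powr (\<nu>-2)\<bar> \<le> 8 powr p * Z + 2 powr p * Z"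
        using t2 g3 hp by (simp only: abs_le_iff) linarith
      also have "\<dots> = (8 powr p + 2 powr p) * Z" by (simp add: algebra_simps)
      also have "\<dots> \<le> M * W"
      proof -
        have "2 powr p \<le> 2 powr p * (1 + \<bar>\<nu>\<bar> + \<bar>\<nu>*(\<nu>-1)\<bar>)"
          using mult_left_mono[of 1 "1 + \<bar>\<nu>\<bar> + \<bar>\<nu>*(\<nu>-1)\<bar>" "2 powr p"] by simp
        hence "8 powr p + 2 powr p \<le> M" unfolding M_def using C10 C20 by linarith
        thus ?thesis using Z0 ZW M0 by (intro mult_mono) auto
      qed
      finally show ?thesis using A unfolding W_def q_def by simp
    qed
  qed
  show ?thesis using M0 main by blast
qed




lemma small_pow:
  fixes t p :: real assumes p: "p \<ge> 2"
  shows "\<bar>t\<bar> \<le> 1 + \<bar>t\<bar> powr p" "t^2 \<le> 1 + \<bar>t\<bar> powr p"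
proof -
  have qp0: "\<bar>t\<bar> powr p \<ge> 0" by simp
  show "\<bar>t\<bar> \<le> 1 + \<bar>t\<bar> powr p"
  proof (cases "\<bar>t\<bar> \<le> 1")
    case True thus ?thesis using qp0 by linarith
  next
    case False
    hence "\<bar>t\<bar> powr 1 \<le> \<bar>t\<bar> powr p" using p by (intro powr_mono) auto
    thus ?thesis using False by simp
  qed
  show "t^2 \<le> 1 + \<bar>t\<bar> powr p"
  proof (cases "\<bar>t\<bar> \<le> 1")
    case True hence "t^2 \<le> 1" by (simp add: abs_square_le_1)
    thus ?thesis using qp0 by linarith
  next
    case False
    hence "\<bar>t\<bar> powr 2 \<le> \<bar>t\<bar> powr p" using p by (intro powr_mono) auto
    thus ?thesis using False by simp
  qed
qed

lemma step_calc:
  fixes Q :: "(real \<times> 'i) pmf" and Hf Kf :: "real \<Rightarrow> real" and b :: "'i \<Rightarrow> real"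
  assumes mom: "(\<integral>\<^sup>+ w. ennreal (\<bar>fst w - x\<bar> powr p) \<partial>measure_pmf Q) \<le> ennreal Cp"
    and p: "p > 2" and finS: "finite S" and supp: "\<And>w. w \<in> set_pmf Q \<Longrightarrow> snd w \<in> S"
    and B: "\<And>j. j \<in> S \<Longrightarrow> \<bar>b j\<bar> \<le> B" and B0: "B \<ge> 0" and M0: "M \<ge> 0" and V0: "V \<ge> 0"
    and bH: "\<And>y. \<bar>Hf y - h0 - \<nu>*x1*(y-x) - \<nu>*(\<nu>-1)/2*x2*(y-x)^2\<bar> \<le> M*(V*(1 + \<bar>y-x\<bar> powr p))"
    and bK: "\<And>y. \<bar>Kf y - x2\<bar> \<le> M*(V*(1 + \<bar>y-x\<bar> powr p))"
  shows "\<bar>measure_pmf.expectation Q (\<lambda>w. (Hf (fst w) + \<nu>/2 * b (snd w) * Kf (fst w)) - (h0 + \<nu>/2 * b i * x2))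
     - (\<nu>*x1*measure_pmf.expectation Q (\<lambda>w. fst w - x) + \<nu>*(\<nu>-1)/2*x2*measure_pmf.expectation Q (\<lambda>w. (fst w - x)^2)
        + \<nu>/2*x2*(\<Sum>j\<in>S. (b j - b i) * measure_pmf.prob Q {w. snd w = j}))\<bar>
     \<le> (1 + \<bar>\<nu>\<bar>/2*B) * (M*(V*(1+\<bar>Cp\<bar>)))"
proof -
  define D where "D w = \<bar>fst w - x\<bar> powr p" for w :: "real \<times> 'i"
  have intD: "integrable Q D"
  proof (rule integrableI_nonneg)
    show "D \<in> borel_measurable Q" by simp
    show "AE w in Q. 0 \<le> D w" by (simp add: D_def)
    have "(\<integral>\<^sup>+ w. ennreal (D w) \<partial>measure_pmf Q) \<le> ennreal Cp" using mom by (simp add: D_def)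
    also have "\<dots> < \<infinity>" by simp
    finally show "(\<integral>\<^sup>+ w. ennreal (D w) \<partial>measure_pmf Q) < \<infinity>" .
  qed
  have ED: "measure_pmf.expectation Q D \<le> \<bar>Cp\<bar>"
  proof -
    have "measure_pmf.expectation Q D = enn2real (\<integral>\<^sup>+ w. ennreal (D w) \<partial>measure_pmf Q)"
      by (rule integral_eq_nn_integral) (auto simp: D_def)
    also have "\<dots> \<le> enn2real (ennreal Cp)"
      using mom by (intro enn2real_mono) (auto simp: D_def)
    also have "\<dots> \<le> \<bar>Cp\<bar>" by (cases "Cp \<ge> 0") (auto simp: ennreal_neg)
    finally show ?thesis .
  qed
  define K where "K = (1 + \<bar>\<nu>\<bar>/2*B) * (M*V)"
  have K0: "K \<ge> 0" unfolding K_def using B0 M0 V0 by simp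
  define G where "G w = K * (1 + D w)" for w
  have intG: "integrable Q G" unfolding G_def using intD by simp
  define R where "R w = (Hf (fst w) + \<nu>/2 * b (snd w) * Kf (fst w)) - (h0 + \<nu>/2 * b i * x2)
     - (\<nu>*x1*(fst w - x) + \<nu>*(\<nu>-1)/2*x2*(fst w - x)^2 + \<nu>/2*x2*(b (snd w) - b i))" for w
  have Rb: "\<bar>R w\<bar> \<le> G w" if w: "w \<in> set_pmf Q" for w
  proof -
    have eq: "R w = (Hf (fst w) - h0 - \<nu>*x1*(fst w-x) - \<nu>*(\<nu>-1)/2*x2*(fst w-x)^2) + \<nu>/2 * b (snd w) * (Kf (fst w) - x2)"
      unfolding R_def by (simp add: field_simps)
    have bb: "\<bar>b (snd w)\<bar> \<le> B" using B supp w by blast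
    have k: "\<bar>\<nu>/2 * b (snd w) * (Kf (fst w) - x2)\<bar> \<le> \<bar>\<nu>\<bar>/2 * B * (M*(V*(1 + D w)))"
    proof -
      have "\<bar>\<nu>/2 * b (snd w) * (Kf (fst w) - x2)\<bar> = \<bar>\<nu>\<bar>/2 * \<bar>b (snd w)\<bar> * \<bar>Kf (fst w) - x2\<bar>" by (simp add: abs_mult)
      also have "\<dots> \<le> \<bar>\<nu>\<bar>/2 * B * (M*(V*(1 + D w)))"
        using bb bK[of "fst w"] by (intro mult_mono) (auto simp: D_def)
      finally show ?thesis .
    qed
    have h: "\<bar>Hf (fst w) - h0 - \<nu>*x1*(fst w-x) - \<nu>*(\<nu>-1)/2*x2*(fst w-x)^2\<bar> \<le> M*(V*(1 + D w))"
      using bH[of "fst w"] by (simp add: D_def)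
    have "\<bar>R w\<bar> \<le> M*(V*(1 + D w)) + \<bar>\<nu>\<bar>/2 * B * (M*(V*(1 + D w)))"
      unfolding eq using h k abs_triangle_ineq[of "Hf (fst w) - h0 - \<nu>*x1*(fst w-x) - \<nu>*(\<nu>-1)/2*x2*(fst w-x)^2" "\<nu>/2 * b (snd w) * (Kf (fst w) - x2)"]
      by linarith
    also have "\<dots> = G w" by (simp add: G_def K_def algebra_simps)
    finally show ?thesis .
  qed
  have intR: "integrable Q R"
    by (rule Bochner_Integration.integrable_bound[OF intG]) (auto intro!: AE_pmfI simp: order.trans[OF Rb] intro: order.trans[OF Rb])
  have intD1: "integrable Q (\<lambda>w. 1 + D w)" using intD by simp
  have int1: "integrable Q (\<lambda>w. fst w - x)"
    by (rule Bochner_Integration.integrable_bound[OF intD1]) (use small_pow[of p] p in \<open>auto intro!: AE_I2 simp: D_def\<close>)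
  have int2: "integrable Q (\<lambda>w. (fst w - x)^2)"
    by (rule Bochner_Integration.integrable_bound[OF intD1]) (use small_pow[of p] p in \<open>auto intro!: AE_I2 simp: D_def\<close>)
  have int3: "integrable Q (\<lambda>w. b (snd w) - b i)"
  proof (rule Bochner_Integration.integrable_bound[of _ "\<lambda>w. B + \<bar>b i\<bar>"])
    show "integrable Q (\<lambda>w. B + \<bar>b i\<bar>)" by simp
    show "(\<lambda>w. b (snd w) - b i) \<in> borel_measurable Q" by simp
    show "AE w in Q. norm (b (snd w) - b i) \<le> norm (B + \<bar>b i\<bar>)"
    proof (rule AE_pmfI)
      fix w assume "w \<in> set_pmf Q"
      hence "\<bar>b (snd w)\<bar> \<le> B" using B supp by blast
      thus "norm (b (snd w) - b i) \<le> norm (B + \<bar>b i\<bar>)" using B0 by simp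
    qed
  qed
  have E3: "measure_pmf.expectation Q (\<lambda>w. b (snd w) - b i) = (\<Sum>j\<in>S. (b j - b i) * measure_pmf.prob Q {w. snd w = j})"
  proof -
    have "measure_pmf.expectation Q (\<lambda>w. b (snd w) - b i) = measure_pmf.expectation (map_pmf snd Q) (\<lambda>j. b j - b i)"
      by simp
    also have "\<dots> = (\<Sum>j\<in>S. (b j - b i) * pmf (map_pmf snd Q) j)"
      by (rule integral_measure_pmf_real) (use finS supp in auto)
    also have "\<dots> = (\<Sum>j\<in>S. (b j - b i) * measure_pmf.prob Q {w. snd w = j})"
      by (simp add: pmf_map vimage_def)
    finally show ?thesis .
  qed
  define L where "L w = \<nu>*x1*(fst w - x) + \<nu>*(\<nu>-1)/2*x2*(fst w - x)^2 + \<nu>/2*x2*(b (snd w) - b i)" for w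
  have intL: "integrable Q L" unfolding L_def using int1 int2 int3 by simp
  have EL: "measure_pmf.expectation Q L = \<nu>*x1*measure_pmf.expectation Q (\<lambda>w. fst w - x) + \<nu>*(\<nu>-1)/2*x2*measure_pmf.expectation Q (\<lambda>w. (fst w - x)^2)
        + \<nu>/2*x2*(\<Sum>j\<in>S. (b j - b i) * measure_pmf.prob Q {w. snd w = j})"
    unfolding L_def using int1 int2 int3 by (simp add: E3[symmetric])
  have split: "(\<lambda>w. (Hf (fst w) + \<nu>/2 * b (snd w) * Kf (fst w)) - (h0 + \<nu>/2 * b i * x2)) = (\<lambda>w. L w + R w)"
    by (rule ext) (simp add: L_def R_def)
  have ER: "\<bar>measure_pmf.expectation Q R\<bar> \<le> K * (1 + \<bar>Cp\<bar>)"
  proof -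
    have "\<bar>measure_pmf.expectation Q R\<bar> \<le> measure_pmf.expectation Q (\<lambda>w. norm (R w))"
      using integral_norm_bound[of Q R] by simp
    also have "\<dots> \<le> measure_pmf.expectation Q G"
      by (rule integral_mono_AE) (use intR intG Rb in \<open>auto intro!: AE_pmfI\<close>)
    also have "\<dots> = K * (1 + measure_pmf.expectation Q D)" unfolding G_def using intD by simp
    also have "\<dots> \<le> K * (1 + \<bar>Cp\<bar>)" using ED K0 by (intro mult_left_mono) auto
    finally show ?thesis .
  qed
  have Keq: "K * (1 + \<bar>Cp\<bar>) = (1 + \<bar>\<nu>\<bar>/2*B) * (M*(V*(1+\<bar>Cp\<bar>)))" by (simp add: K_def)
  have sum: "measure_pmf.expectation Q (\<lambda>w. L w + R w) = measure_pmf.expectation Q L + measure_pmf.expectation Q R"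
    by (rule Bochner_Integration.integral_add[OF intL intR])
  show ?thesis
    unfolding split sum EL[symmetric] using ER Keq by simp
qed




theorem lemma3p2:
  fixes S :: "'i set" and \<Sigma> :: "(real \<times> 'i) set"
    and P :: "real \<times> 'i \<Rightarrow> (real \<times> 'i) pmf"
    and p Cp :: real and q :: "'i \<Rightarrow> 'i \<Rightarrow> real"
    and c s2 b :: "'i \<Rightarrow> real" and \<nu> :: real
  assumes S_fin: "finite S" and S_ne: "S \<noteq> {}"
    and Sigma_sub: "\<Sigma> \<subseteq> {0..} \<times> S"
    and loc_fin: "\<forall>r\<ge>0. finite (\<Sigma> \<inter> ({0..r} \<times> S))"
    and P_closed: "\<forall>z\<in>\<Sigma>. set_pmf (P z) \<subseteq> \<Sigma>"
    and irred: "\<forall>z\<in>\<Sigma>. \<forall>w\<in>\<Sigma>. (z, w) \<in> (step_rel \<Sigma> P)\<^sup>*"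
    and unbdd: "\<forall>k\<in>S. \<not> bdd_above (line \<Sigma> k)"
    and p_gt: "p > 2"
    and moment: "\<forall>z\<in>\<Sigma>. (\<integral>\<^sup>+ w. ennreal (\<bar>fst w - fst z\<bar> powr p) \<partial>measure_pmf (P z)) \<le> ennreal Cp"
    and q_lim: "\<forall>i\<in>S. \<forall>j\<in>S.
        ((\<lambda>x. measure_pmf.prob (P (x, i)) {w. snd w = j}) \<longlongrightarrow> q i j) (along_line \<Sigma> i)"
    and q_nonneg: "\<forall>i\<in>S. \<forall>j\<in>S. q i j \<ge> 0"
    and q_stoch: "\<forall>i\<in>S. (\<Sum>j\<in>S. q i j) = 1"
    and q_irred: "\<forall>i\<in>S. \<forall>j\<in>S. (i, j) \<in> {(a, b'). a \<in> S \<and> b' \<in> S \<and> q a b' > 0}\<^sup>*"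
    and mu_asym: "\<forall>i\<in>S. (\<lambda>x. measure_pmf.expectation (P (x, i)) (\<lambda>w. fst w - x) - c i / x)
                     \<in> o[along_line \<Sigma> i](\<lambda>x. 1 / x)"
    and sigma_asym: "\<forall>i\<in>S. ((\<lambda>x. measure_pmf.expectation (P (x, i)) (\<lambda>w. (fst w - x)\<^sup>2))
                     \<longlongrightarrow> s2 i) (along_line \<Sigma> i)"
    and s2_nonneg: "\<forall>i\<in>S. s2 i \<ge> 0"
    and s2_nz: "\<exists>i\<in>S. s2 i \<noteq> 0"
    and nu_range: "2 - p < \<nu>" "\<nu> \<le> p"
  shows "\<forall>i\<in>S. \<exists>g. (g \<longlongrightarrow> 0) (along_line \<Sigma> i) \<and>
           (\<forall>\<^sub>F x in along_line \<Sigma> i.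
              measure_pmf.expectation (P (x, i)) (\<lambda>w. f_nu S b \<nu> w - f_nu S b \<nu> (x, i))
              = \<nu> / 2 * x powr (\<nu> - 2) *
                (2 * c i + (\<nu> - 1) * s2 i + (\<Sum>j\<in>S. (b j - b i) * q i j) + g x))"
proof (intro ballI)
  fix i assume iS: "i \<in> S"
  define X0 where "X0 = x0_const S b \<nu>"
  have Mx: "Max ((\<lambda>i. \<bar>b i\<bar>) ` S) \<ge> 0"
    using S_fin iS by (meson Max_ge finite_imageI imageI abs_ge_zero order.trans)
  have X0: "X0 \<ge> 1" unfolding X0_def x0_const_def using Mx by simp
  have f_eq: "f_nu S b \<nu> w = (max (fst w) X0) powr \<nu> + \<nu>/2 * b (snd w) * (max (fst w) X0) powr (\<nu>-2)" for w
    unfolding f_nu_def Let_def X0_def[symmetric] by (auto simp: max_def)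
  define F where "F = along_line \<Sigma> i"
  have evS: "eventually (\<lambda>x. (x,i) \<in> \<Sigma>) F"
    unfolding F_def along_line_def eventually_inf_principal line_def by simp
  have Fle: "F \<le> at_top" unfolding F_def along_line_def by simp
  have evT: "eventually (\<lambda>x. x \<ge> T) F" for T
    using Fle eventually_ge_at_top[of T] by (rule filter_leD)
  have "\<exists>g. (g \<longlongrightarrow> 0) F \<and>
           (\<forall>\<^sub>F x in F.
              measure_pmf.expectation (P (x, i)) (\<lambda>w. f_nu S b \<nu> w - f_nu S b \<nu> (x, i))
              = \<nu> / 2 * x powr (\<nu> - 2) *
                (2 * c i + (\<nu> - 1) * s2 i + (\<Sum>j\<in>S. (b j - b i) * q i j) + g x))"
  proof (cases "\<nu> = 0")
    case True
    have f1: "f_nu S b \<nu> w = 1" for w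
    proof -
      have "max (fst w) X0 > 0" using X0 by simp
      thus ?thesis unfolding f_eq by (simp add: True)
    qed
    have f0: "f_nu S b 0 w = 1" for w using f1[of w] True by simp
    show ?thesis by (intro exI[of _ "\<lambda>_. 0"] conjI tendsto_const always_eventually allI) (simp add: f0 True)
  next
    case False
    define \<epsilon> where "\<epsilon> = min (1/2) (min ((p-2)/2) (\<nu>+p-2))"
    have eps: "0 < \<epsilon>" "\<epsilon> \<le> 1/2" "\<epsilon> \<le> (p-2)/2" "\<epsilon> \<le> \<nu>+p-2"
      using p_gt nu_range unfolding \<epsilon>_def by (auto simp: min_def split: if_splits)
    obtain M where M0: "M \<ge> 0" and Mb: "\<forall>x y. x \<ge> 2*X0 \<longrightarrow>
     \<bar>(max y X0) powr \<nu> - x powr \<nu> - \<nu> * x powr (\<nu>-1) * (y-x) - \<nu>*(\<nu>-1)/2 * x powr (\<nu>-2) * (y-x)^2\<bar>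
        \<le> M * (x powr (\<nu>-2-\<epsilon>) * (1 + \<bar>y-x\<bar> powr p)) \<and>
     \<bar>(max y X0) powr (\<nu>-2) - x powr (\<nu>-2)\<bar> \<le> M * (x powr (\<nu>-2-\<epsilon>) * (1 + \<bar>y-x\<bar> powr p))"
      using pw[OF X0 p_gt nu_range eps] by blast
    define B where "B = (\<Sum>j\<in>S. \<bar>b j\<bar>)"
    have B0: "B \<ge> 0" unfolding B_def by (simp add: sum_nonneg)
    have Bj: "\<bar>b j\<bar> \<le> B" if "j \<in> S" for j
      unfolding B_def using S_fin that by (intro member_le_sum) auto
    define mu where "mu x = measure_pmf.expectation (P (x,i)) (\<lambda>w. fst w - x)" for x
    define sgm where "sgm x = measure_pmf.expectation (P (x,i)) (\<lambda>w. (fst w - x)^2)" for x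
    define pr where "pr x j = measure_pmf.prob (P (x,i)) {w. snd w = j}" for x j
    define A where "A = 2 * c i + (\<nu> - 1) * s2 i + (\<Sum>j\<in>S. (b j - b i) * q i j)"
    define E where "E x = measure_pmf.expectation (P (x, i)) (\<lambda>w. f_nu S b \<nu> w - f_nu S b \<nu> (x, i))" for x
    define r where "r x = 2/\<nu> * x powr (2-\<nu>) * E x - (2 * (x * mu x) + (\<nu>-1) * sgm x + (\<Sum>j\<in>S. (b j - b i) * pr x j))" for x
    define g where "g x = 2/\<nu> * x powr (2-\<nu>) * E x - A" for x
    define Kc where "Kc = 2/\<bar>\<nu>\<bar> * ((1 + \<bar>\<nu>\<bar>/2*B) * (M*(1+\<bar>Cp\<bar>)))"
    have rb: "eventually (\<lambda>x. norm (r x) \<le> Kc * x powr (-\<epsilon>)) F"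
    proof -
      have "eventually (\<lambda>x. x \<ge> 2*X0 \<and> (x,i) \<in> \<Sigma>) F" using evT evS by (rule eventually_conj)
      thus ?thesis
      proof (rule eventually_mono)
        fix x assume x: "x \<ge> 2*X0 \<and> (x,i) \<in> \<Sigma>"
        have xp: "x > 0" using x X0 by auto
        have xX: "max x X0 = x" using x X0 by auto
        have mom: "(\<integral>\<^sup>+ w. ennreal (\<bar>fst w - x\<bar> powr p) \<partial>measure_pmf (P (x,i))) \<le> ennreal Cp"
          using moment x by auto
        have supp: "snd w \<in> S" if "w \<in> set_pmf (P (x,i))" for w
          using P_closed Sigma_sub x that by force
        define V where "V = x powr (\<nu>-2-\<epsilon>)"
        have V0: "V \<ge> 0" unfolding V_def by simp
        have SC: "\<bar>measure_pmf.expectation (P (x,i)) (\<lambda>w. ((max (fst w) X0) powr \<nu> + \<nu>/2 * b (snd w) * (max (fst w) X0) powr (\<nu>-2)) - (x powr \<nu> + \<nu>/2 * b i * x powr (\<nu>-2)))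
           - (\<nu>*x powr (\<nu>-1)*mu x + \<nu>*(\<nu>-1)/2*x powr (\<nu>-2) * sgm x
              + \<nu>/2*x powr (\<nu>-2)*(\<Sum>j\<in>S. (b j - b i) * pr x j))\<bar>
           \<le> (1 + \<bar>\<nu>\<bar>/2*B) * (M*(V*(1+\<bar>Cp\<bar>)))"
          unfolding mu_def sgm_def pr_def
          by (rule step_calc[OF mom p_gt S_fin supp Bj B0 M0 V0]) (use Mb x in \<open>simp_all add: V_def\<close>)
        have Ex: "E x = measure_pmf.expectation (P (x,i)) (\<lambda>w. ((max (fst w) X0) powr \<nu> + \<nu>/2 * b (snd w) * (max (fst w) X0) powr (\<nu>-2)) - (x powr \<nu> + \<nu>/2 * b i * x powr (\<nu>-2)))"
          unfolding E_def f_eq using xX by simp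
        define T where "T = \<nu>*x powr (\<nu>-1)*mu x + \<nu>*(\<nu>-1)/2*x powr (\<nu>-2) * sgm x
              + \<nu>/2*x powr (\<nu>-2)*(\<Sum>j\<in>S. (b j - b i) * pr x j)"
        have p1: "x powr (2-\<nu>) * x powr (\<nu>-1) = x" using xp by (simp add: powr_add[symmetric])
        have p2: "x powr (2-\<nu>) * x powr (\<nu>-2) = 1" using xp by (simp add: powr_add[symmetric])
        have p3: "x powr (2-\<nu>) * V = x powr (-\<epsilon>)"
        proof -
          have "-\<epsilon> = (2-\<nu>) + (\<nu>-2-\<epsilon>)" by simp
          thus ?thesis unfolding V_def by (simp only: powr_add)
        qed
        have TT: "2/\<nu> * x powr (2-\<nu>) * T = 2 * (x * mu x) + (\<nu>-1) * sgm x + (\<Sum>j\<in>S. (b j - b i) * pr x j)"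
        proof -
          have "2/\<nu> * x powr (2-\<nu>) * T = 2/\<nu>*\<nu>*(x powr (2-\<nu>) * x powr (\<nu>-1))*mu x
              + 2/\<nu>*(\<nu>*(\<nu>-1)/2)*(x powr (2-\<nu>) * x powr (\<nu>-2)) * sgm x
              + 2/\<nu>*(\<nu>/2)*(x powr (2-\<nu>) * x powr (\<nu>-2))*(\<Sum>j\<in>S. (b j - b i) * pr x j)"
            unfolding T_def using False by (simp add: field_simps)
          also have "\<dots> = 2 * (x * mu x) + (\<nu>-1) * sgm x + (\<Sum>j\<in>S. (b j - b i) * pr x j)"
            unfolding p1 p2 using False by simp
          finally show ?thesis .
        qed
        have rx: "r x = 2/\<nu> * x powr (2-\<nu>) * (E x - T)"
          unfolding r_def TT[symmetric] using False by (simp add: field_simps)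
        have "norm (r x) = 2/\<bar>\<nu>\<bar> * x powr (2-\<nu>) * \<bar>E x - T\<bar>"
          unfolding rx by (simp add: abs_mult)
        also have "\<dots> \<le> 2/\<bar>\<nu>\<bar> * x powr (2-\<nu>) * ((1 + \<bar>\<nu>\<bar>/2*B) * (M*(V*(1+\<bar>Cp\<bar>))))"
          using SC unfolding Ex T_def by (intro mult_left_mono) auto
        also have "\<dots> = Kc * (x powr (2-\<nu>) * V)" unfolding Kc_def by (simp add: algebra_simps)
        also have "\<dots> = Kc * x powr (-\<epsilon>)" unfolding p3 ..
        finally show "norm (r x) \<le> Kc * x powr (-\<epsilon>)" .
      qed
    qed
    have r0: "(r \<longlongrightarrow> 0) F"
    proof (rule Lim_null_comparison[OF rb])
      have "((\<lambda>x. x powr (-\<epsilon>)) \<longlongrightarrow> 0) at_top"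
        using eps by (intro tendsto_neg_powr filterlim_ident) auto
      hence "((\<lambda>x. Kc * x powr (-\<epsilon>)) \<longlongrightarrow> 0) at_top" by (rule tendsto_mult_right_zero)
      thus "((\<lambda>x. Kc * x powr (-\<epsilon>)) \<longlongrightarrow> 0) F" by (rule tendsto_mono[OF Fle])
    qed
    have xmu: "((\<lambda>x. x * mu x) \<longlongrightarrow> c i) F"
    proof -
      have "((\<lambda>x. (mu x - c i / x) / (1 / x)) \<longlongrightarrow> 0) F"
        using mu_asym iS unfolding F_def mu_def by (intro smalloD_tendsto) auto
      moreover have "eventually (\<lambda>x. (mu x - c i / x) / (1 / x) = x * mu x - c i) F"
        using evT[of 1] by eventually_elim (auto simp: field_simps)
      ultimately have "((\<lambda>x. x * mu x - c i) \<longlongrightarrow> 0) F" by (rule Lim_transform_eventually)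
      hence "((\<lambda>x. x * mu x - c i + c i) \<longlongrightarrow> 0 + c i) F" by (intro tendsto_add tendsto_const)
      thus ?thesis by simp
    qed
    have sgl: "(sgm \<longlongrightarrow> s2 i) F" using sigma_asym iS unfolding F_def sgm_def by auto
    have prl: "((\<lambda>x. pr x j) \<longlongrightarrow> q i j) F" if "j \<in> S" for j
      using q_lim iS that unfolding F_def pr_def by auto
    have lim: "((\<lambda>x. 2 * (x * mu x) + (\<nu>-1) * sgm x + (\<Sum>j\<in>S. (b j - b i) * pr x j) + r x - A)
        \<longlongrightarrow> 2 * c i + (\<nu>-1) * s2 i + (\<Sum>j\<in>S. (b j - b i) * q i j) + 0 - A) F"
      by (intro tendsto_intros xmu sgl r0 tendsto_sum prl)
    have geq: "g = (\<lambda>x. 2 * (x * mu x) + (\<nu>-1) * sgm x + (\<Sum>j\<in>S. (b j - b i) * pr x j) + r x - A)"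
      by (rule ext) (simp add: g_def r_def)
    have g0: "(g \<longlongrightarrow> 0) F" unfolding geq using lim by (simp add: A_def)
    have ev: "\<forall>\<^sub>F x in F. E x = \<nu> / 2 * x powr (\<nu> - 2) * (A + g x)"
      using evT[of 1]
    proof (rule eventually_mono)
      fix x :: real assume "x \<ge> 1"
      hence p2: "x powr (\<nu>-2) * x powr (2-\<nu>) = 1" by (simp add: powr_add[symmetric])
      have "\<nu> / 2 * x powr (\<nu> - 2) * (A + g x) = (\<nu>/2 * (2/\<nu>)) * (x powr (\<nu>-2) * x powr (2-\<nu>)) * E x"
        by (simp add: g_def algebra_simps)
      also have "\<dots> = E x" unfolding p2 using False by simp
      finally show "E x = \<nu> / 2 * x powr (\<nu> - 2) * (A + g x)" by simp
    qed
    show ?thesis using g0 ev unfolding E_def A_def by blast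
  qed
  thus "\<exists>g. (g \<longlongrightarrow> 0) (along_line \<Sigma> i) \<and>
           (\<forall>\<^sub>F x in along_line \<Sigma> i.
              measure_pmf.expectation (P (x, i)) (\<lambda>w. f_nu S b \<nu> w - f_nu S b \<nu> (x, i))
              = \<nu> / 2 * x powr (\<nu> - 2) *
                (2 * c i + (\<nu> - 1) * s2 i + (\<Sum>j\<in>S. (b j - b i) * q i j) + g x))"
    unfolding F_def .
qed



end
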